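(* Let $N>2$ be an odd positive integer with smallest prime factor $p$, and let $K\ge N$ be an integer. Let $a_2,a_1\in\mathbb{Z}_N$ with $\gcd(a_2,N)=1$, and let $f:\mathbb{Z}_N\to\mathbb{Z}_K$ be defined by $f(x)=\phi(a_2x^2+a_1x)$, where $\phi:\mathbb{Z}_N\to\mathbb{Z}_K$ sends the class of $y\in\{0,\dots,N-1\}$ to the class of $y$ modulo $K$. For $0\le k<N$ let $\mathbf{a}_k=(a_k(0),\dots,a_k(K-1))$ with $a_k(t)=\omega_K^{tf(k)}$. Let $\mathbf{h}_0,\dots,\mathbf{h}_{N-1}$ be unimodular complex sequences of length $N$ such that for all $0\le i\ne j<N$ and all $0\le v<N$, $$\Big|\sum_{n=0}^{N-1}h_i(n)h_j^*(n)\Big|\le 1,\qquad \Big|\sum_{n=0}^{N-1}h_i(n)h_j^*(n)\omega_N^{nv}\Big|<N.$$ For $0\le i<N$ define $\mathbf{s}_i$ of length $NK$ by $s_i(tN+k)=h_i(k)a_k(t)$ ($0\le t<K$, $0\le k<N$) and let $\mathcal{S}=\{\mathbf{s}_0,\dots,\mathbf{s}_{N-1}\}$. Then $\mathcal{S}$ is a periodic $(N,NK,\Pi,K)$-LAZ sequence set, where (1) $\Pi=(-p,p)\times(-N,N)$ if $K=N$; (2) $\Pi=(-p,p)\times(-K+N-1,K-N+1)$ if $N<K<2N-1$; (3) $\Pi=(-p,p)\times(-K,K)$ if $K\ge 2N-1$.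
   Context: $\omega_L=e^{2\pi\sqrt{-1}/L}$, $z^*$ is complex conjugation, unimodular means all entries have modulus 1. For sequences $\mathbf{a},\mathbf{b}$ of length $L$, the periodic cross-ambiguity function is $AF_{\mathbf{a},\mathbf{b}}(\tau,v)=\sum_{t=0}^{L-1}a(t)b^*(\langle t+\tau\rangle_L)\omega_L^{vt}$ ($\langle\cdot\rangle_L$ = reduction mod $L$), $AF_{\mathbf{a}}=AF_{\mathbf{a},\mathbf{a}}$. A set of $M$ sequences of length $L$ is an $(M,L,\Pi,\theta)$-LAZ periodic sequence set if $|AF_{\mathbf{a}}(\tau,v)|\le\theta$ for all sequences $\mathbf{a}$ in the set and all integer $(0,0)\ne(\tau,v)\in\Pi$, and $|AF_{\mathbf{a},\mathbf{b}}(\tau,v)|\le\theta$ for all distinct $\mathbf{a},\mathbf{b}$ in the set and all integer $(\tau,v)\in\Pi$. *)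

theory Defs
  imports Complex_Main "HOL-Computational_Algebra.Primes"
begin

definition omega :: "nat \<Rightarrow> complex" where
  "omega L = exp (2 * of_real pi * \<i> / of_nat L)"

text \<open>Periodic cross-ambiguity function of sequences of length L (sequences are
  functions nat => complex, only the values at 0..L-1 matter).\<close>
definition AF :: "nat \<Rightarrow> (nat \<Rightarrow> complex) \<Rightarrow> (nat \<Rightarrow> complex) \<Rightarrow> int \<Rightarrow> int \<Rightarrow> complex" where
  "AF L a b \<tau> v = (\<Sum>t<L. a t * cnj (b (nat ((int t + \<tau>) mod int L))) * omega L powi (v * int t))"

definition LAZ_set :: "nat \<Rightarrow> nat \<Rightarrow> (int \<times> int) set \<Rightarrow> real \<Rightarrow> (nat \<Rightarrow> nat \<Rightarrow> complex) \<Rightarrow> bool" where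
  "LAZ_set M L Pi \<theta> s \<longleftrightarrow>
     (\<forall>i<M. \<forall>\<tau> v. (\<tau>, v) \<in> Pi \<and> (\<tau>, v) \<noteq> (0, 0) \<longrightarrow> cmod (AF L (s i) (s i) \<tau> v) \<le> \<theta>) \<and>
     (\<forall>i<M. \<forall>j<M. i \<noteq> j \<longrightarrow> (\<forall>\<tau> v. (\<tau>, v) \<in> Pi \<longrightarrow> cmod (AF L (s i) (s j) \<tau> v) \<le> \<theta>))"

definition box_region :: "int \<Rightarrow> int \<Rightarrow> (int \<times> int) set" where
  "box_region A B = {(\<tau>, v). - A < \<tau> \<and> \<tau> < A \<and> - B < v \<and> v < B}"

end

theory Submission
  imports Defs
begin

lemma omega_cis: "omega L = cis (2 * pi / real L)"
  unfolding omega_def cis_conv_exp by (simp add: field_simps)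

lemma omega_pow: "omega L ^ n = cis (2 * pi * real n / real L)"
  unfolding omega_cis DeMoivre by (simp add: field_simps)

lemma omega_powi: "omega L powi n = cis (2 * pi * real_of_int n / real L)"
  unfolding omega_cis cis_power_int by (simp add: field_simps)

lemma cis_int_period:
  assumes "K > 0" and "a mod int K = b mod int K"
  shows "cis (2 * pi * real_of_int a / real K) = cis (2 * pi * real_of_int b / real K)"
proof -
  obtain m where m: "a = b + int K * m"
    using assms(2) by (metis mod_eqE mult.commute add.commute dvd_def eq_diff_eq)
  have "2 * pi * real_of_int a / real K = 2 * pi * real_of_int b / real K + 2 * pi * real_of_int m"
    using assms(1) by (simp add: m field_simps)
  then show ?thesis
    by (simp add: cis_mult[symmetric])
qed


lemma sum_split_nat: "(\<Sum>m<N*(K::nat). g m) = (\<Sum>t<K. \<Sum>k<N. g (t*N+k))"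
proof (induction K)
  case 0 then show ?case by simp
next
  case (Suc K)
  have "{..<N * Suc K} = {..<N*K} \<union> {N*K..<N*K+N}" by auto
  moreover have "(\<Sum>m\<in>{N*K..<N*K+N}. g m) = (\<Sum>k<N. g (K*N+k))"
  proof -
    have "(\<Sum>m\<in>{N*K..<N*K+N}. g m) = (\<Sum>k\<in>{0..<N}. g (k + N*K))"
      using sum.shift_bounds_nat_ivl[of g 0 "N*K" N] by (simp add: add.commute)
    then show ?thesis by (simp add: atLeast0LessThan add.commute mult.commute)
  qed
  moreover have d: "{..<N*K} \<inter> {N*K..<N*K+N} = {}" by auto
  ultimately have "(\<Sum>m<N*Suc K. g m) = (\<Sum>m<N*K. g m) + (\<Sum>k<N. g (K*N+k))"
    using sum.union_disjoint[OF finite_lessThan finite_atLeastLessThan d, of g] by simp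
  then show ?case using Suc by simp
qed


lemma cis_int_1: "cis (2 * pi * real_of_int n) = 1"
  by (rule cis_multiple_2pi) simp

lemma geom_cis:
  assumes "K > 0"
  shows "(\<Sum>t<K. cis (2 * pi * real t * real_of_int d / real K)) = (if int K dvd d then of_nat K else 0)"
proof (cases "int K dvd d")
  case True
  then obtain m where m: "d = int K * m" by blast
  have "cis (2 * pi * real t * real_of_int d / real K) = 1" for t
  proof -
    have "2 * pi * real t * real_of_int d / real K = 2 * pi * real_of_int (int t * m)"
      using assms by (simp add: m field_simps)
    then show ?thesis by (simp only: cis_int_1)
  qed
  then show ?thesis using True by simp
next
  case False
  define z where "z = cis (2 * pi * real_of_int d / real K)"
  have zt: "cis (2 * pi * real t * real_of_int d / real K) = z ^ t" for t
    unfolding z_def DeMoivre by (simp add: field_simps)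
  have zK: "z ^ K = 1"
  proof -
    have "z ^ K = cis (2 * pi * real_of_int d)" unfolding z_def DeMoivre using assms by (simp add: field_simps)
    then show ?thesis by (simp only: cis_int_1)
  qed
  have z1: "z \<noteq> 1"
  proof
    assume "z = 1"
    then have "Re z = 1" by simp
    then have "cos (2 * pi * real_of_int d / real K) = 1" unfolding z_def by simp
    then obtain n :: int where "2 * pi * real_of_int d / real K = real_of_int n * 2 * pi"
      using cos_one_2pi_int by blast
    then have "real_of_int d = real K * real_of_int n" using assms by (simp add: field_simps)
    then have "d = int K * n" by (metis of_int_eq_iff of_int_mult of_int_of_nat_eq)
    then show False using False by simp
  qed
  have "(\<Sum>t<K. z ^ t) = 0" using geometric_sum[OF z1, of K] zK by simp
  then show ?thesis using False by (simp add: zt)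
qed


lemma AF_decomp:
  fixes N K :: nat and f :: "nat \<Rightarrow> nat" and hi hj si sj :: "nat \<Rightarrow> complex" and \<tau> v :: int
  assumes N: "N > 0" and K: "K > 0"
   and si: "\<forall>t<K. \<forall>k<N. si (t*N+k) = hi k * omega K ^ (t * f k)"
   and sj: "\<forall>t<K. \<forall>k<N. sj (t*N+k) = hj k * omega K ^ (t * f k)"
  defines "kk \<equiv> \<lambda>k::nat. nat ((int k + \<tau>) mod int N)"
   and "qq \<equiv> \<lambda>k::nat. (int k + \<tau>) div int N"
  defines "C \<equiv> \<lambda>k. hi k * cnj (hj (kk k)) * cis (2*pi*real_of_int v * real k / (real N * real K)
                  - 2*pi*real_of_int (qq k) * real (f (kk k)) / real K)"
   and "D \<equiv> \<lambda>k. int (f k) - int (f (kk k)) + v"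
  shows "AF (N*K) si sj \<tau> v = (\<Sum>k<N. C k * (\<Sum>t<K. cis (2*pi*real t*real_of_int (D k)/real K)))"
proof -
  have trm: "si (t*N+k) * cnj (sj (nat ((int (t*N+k) + \<tau>) mod int (N*K)))) * omega (N*K) powi (v * int (t*N+k))
      = C k * cis (2*pi*real t*real_of_int (D k)/real K)" if t: "t < K" and k: "k < N" for t k
  proof -
    define T where "T = nat ((int t + qq k) mod int K)"
    have TK: "T < K" using K unfolding T_def by (simp add: nat_less_iff)
    have kkN: "kk k < N" using N unfolding kk_def by (simp add: nat_less_iff)
    define a where "a = int (t*N+k) + \<tau>"
    have adiv: "a div int N = int t + qq k"
    proof -
      have "a = (int k + \<tau>) + int t * int N" unfolding a_def by simp
      then show ?thesis unfolding qq_def using N by simp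
    qed
    have amod: "a mod int N = (int k + \<tau>) mod int N"
    proof -
      have "a = (int k + \<tau>) + int t * int N" unfolding a_def by simp
      then show ?thesis using N by simp
    qed
    have "a mod int (N*K) = int N * (a div int N mod int K) + a mod int N"
      using mod_mult2_eq'[of a N K] by simp
    also have "\<dots> = int N * int T + int (kk k)"
      unfolding adiv amod T_def kk_def using N K by simp
    finally have idx: "nat (a mod int (N*K)) = T*N + kk k"
      by (simp add: nat_add_distrib nat_mult_distrib mult.commute)
    have sj_val: "sj (T*N + kk k) = hj (kk k) * omega K ^ (T * f (kk k))"
      using sj TK kkN by blast
    have per: "omega K ^ (T * f (kk k)) = cis (2*pi*real_of_int ((int t + qq k) * int (f (kk k))) / real K)"
    proof -
      have "omega K ^ (T * f (kk k)) = cis (2*pi*real_of_int (int (T * f (kk k))) / real K)"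
        unfolding omega_pow by simp
      also have "\<dots> = cis (2*pi*real_of_int ((int t + qq k) * int (f (kk k))) / real K)"
      proof (rule cis_int_period[OF K])
        have "int T = (int t + qq k) mod int K" unfolding T_def using K by simp
        then show "int (T * f (kk k)) mod int K = (int t + qq k) * int (f (kk k)) mod int K"
          by (simp add: mod_mult_left_eq)
      qed
      finally show ?thesis .
    qed
    have si_val: "si (t*N+k) = hi k * cis (2*pi*real (t * f k) / real K)"
      using si t k by (simp add: omega_pow)
    have om: "omega (N*K) powi (v * int (t*N+k)) = cis (2*pi*real_of_int (v * int (t*N+k)) / real (N*K))"
      by (rule omega_powi)
    have ang: "2*pi*real (t * f k) / real K - 2*pi*real_of_int ((int t + qq k) * int (f (kk k))) / real K
        + 2*pi*real_of_int (v * int (t*N+k)) / real (N*K)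
      = (2*pi*real_of_int v * real k / (real N * real K) - 2*pi*real_of_int (qq k) * real (f (kk k)) / real K)
        + 2*pi*real t*real_of_int (D k)/real K"
      unfolding D_def using N K by (simp add: field_simps)
    have "si (t*N+k) * cnj (sj (nat ((int (t*N+k) + \<tau>) mod int (N*K)))) * omega (N*K) powi (v * int (t*N+k))
       = hi k * cnj (hj (kk k)) * (cis (2*pi*real (t * f k) / real K) * cnj (cis (2*pi*real_of_int ((int t + qq k) * int (f (kk k))) / real K))
           * cis (2*pi*real_of_int (v * int (t*N+k)) / real (N*K)))"
      unfolding si_val om a_def[symmetric] idx sj_val per by (simp add: mult_ac)
    also have "\<dots> = hi k * cnj (hj (kk k)) * cis ((2*pi*real_of_int v * real k / (real N * real K) - 2*pi*real_of_int (qq k) * real (f (kk k)) / real K)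
        + 2*pi*real t*real_of_int (D k)/real K)"
      unfolding cis_cnj cis_mult ang[symmetric] by (simp add: algebra_simps)
    also have "\<dots> = C k * cis (2*pi*real t*real_of_int (D k)/real K)"
      unfolding C_def cis_mult[symmetric] by (simp add: mult_ac)
    finally show ?thesis .
  qed
  have "AF (N*K) si sj \<tau> v = (\<Sum>t<K. \<Sum>k<N. si (t*N+k) * cnj (sj (nat ((int (t*N+k) + \<tau>) mod int (N*K)))) * omega (N*K) powi (v * int (t*N+k)))"
    unfolding AF_def by (rule sum_split_nat)
  also have "\<dots> = (\<Sum>t<K. \<Sum>k<N. C k * cis (2*pi*real t*real_of_int (D k)/real K))"
    using trm by simp
  also have "\<dots> = (\<Sum>k<N. C k * (\<Sum>t<K. cis (2*pi*real t*real_of_int (D k)/real K)))"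
    by (subst sum.swap) (simp add: sum_distrib_left)
  finally show ?thesis .
qed


lemma sum_bound:
  fixes C :: "nat \<Rightarrow> complex"
  assumes C1: "\<forall>k<N. cmod (C k) \<le> 1" and card1: "card {k\<in>{..<N}. P k} \<le> 1"
  shows "cmod (\<Sum>k<N. C k * (if P k then of_nat K else 0)) \<le> real K"
proof -
  have "cmod (\<Sum>k<N. C k * (if P k then of_nat K else 0)) \<le> (\<Sum>k<N. cmod (C k * (if P k then of_nat K else 0)))"
    by (rule norm_sum)
  also have "\<dots> \<le> (\<Sum>k<N. (if P k then real K else 0))"
  proof (rule sum_mono)
    fix k assume "k \<in> {..<N}"
    then have "cmod (C k) \<le> 1" using C1 by simp
    then show "cmod (C k * (if P k then of_nat K else 0)) \<le> (if P k then real K else 0)"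
      by (simp add: norm_mult mult_left_le_one_le)
  qed
  also have "\<dots> = real K * real (card {k\<in>{..<N}. P k})"
    by (simp add: sum.inter_filter[symmetric])
  also have "\<dots> \<le> real K" using card1 by (simp add: mult_left_le)
  finally show ?thesis .
qed

lemma coprime_small:
  fixes N p :: nat and \<tau> :: int
  assumes N: "N > 0" and pmin: "\<forall>q. prime q \<and> q dvd N \<longrightarrow> p \<le> q"
    and t0: "\<tau> \<noteq> 0" and tp: "\<bar>\<tau>\<bar> < int p"
  shows "coprime \<tau> (int N)"
proof (rule ccontr)
  assume nc: "\<not> coprime \<tau> (int N)"
  define g where "g = gcd \<tau> (int N)"
  have g0: "g \<noteq> 0" using N by (simp add: g_def)
  have gu: "\<not> is_unit g" using nc by (simp add: g_def coprime_iff_gcd_eq_1)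
  obtain q where q: "q dvd g" "prime q" using prime_divisor_exists[OF g0 gu] by blast
  have qt: "q dvd \<tau>" and qN: "q dvd int N" using q(1) unfolding g_def by (auto intro: dvd_trans)
  have q2: "q \<ge> 2" using prime_ge_2_int q(2) by blast
  have pq: "prime (nat q)" using q(2) by simp
  have "int (nat q) dvd int N" using qN q2 by simp
  then have "nat q dvd N" by (simp only: of_nat_dvd_iff)
  then have "p \<le> nat q" using pmin pq by blast
  moreover have "\<bar>q\<bar> \<le> \<bar>\<tau>\<bar>" using dvd_imp_le_int[OF t0 qt] .
  ultimately show False using tp q2 by linarith
qed


lemma dvd_mod_diff: "(n::int) dvd x mod n - x"
proof -
  have "x mod n - x = - (n * (x div n))" using minus_mod_eq_mult_div[of x n] by simp
  then show ?thesis by simp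
qed

lemma uniq:
  fixes N K :: nat and a2 a1 \<tau> v :: int and f :: "nat \<Rightarrow> nat"
  assumes N: "N > 0" and odd: "odd N" and a2c: "coprime a2 (int N)" and tc: "coprime \<tau> (int N)"
    and KN: "K \<ge> N"
    and f_def: "\<forall>x<N. f x = nat ((a2 * int x ^ 2 + a1 * int x) mod int N) mod K"
    and V: "K = N \<or> 2*N - 1 \<le> K \<or> \<bar>v\<bar> \<le> int K - int N"
  defines "kk \<equiv> \<lambda>k::nat. nat ((int k + \<tau>) mod int N)"
  defines "D \<equiv> \<lambda>k. int (f k) - int (f (kk k)) + v"
  shows "card {k\<in>{..<N}. int K dvd D k} \<le> 1"
proof -
  define g where "g = (\<lambda>x::int. a2 * x ^ 2 + a1 * x)"
  have fval: "int (f k) = g (int k) mod int N" if "k < N" for k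
  proof -
    have "g (int k) mod int N < int N" using N by simp
    then have "g (int k) mod int N < int K" using KN by linarith
    then have "nat (g (int k) mod int N) < K" using N by (simp add: nat_less_iff)
    then show ?thesis using f_def that N by (simp add: g_def)
  qed
  have kkN: "kk k < N" for k using N unfolding kk_def by (simp add: nat_less_iff)
  have kkv: "int (kk k) = (int k + \<tau>) mod int N" for k using N unfolding kk_def by simp
  have fb: "0 \<le> int (f k) \<and> int (f k) < int N" if "k < N" for k
    using fval[OF that] N by simp
  define X where "X = (\<lambda>k. int (f k) - int (f (kk k)))"
  have Xc: "int N dvd X k + (a2 * \<tau>^2 + a1 * \<tau>) + 2 * a2 * \<tau> * int k" if k: "k < N" for k
  proof -
    have d1: "int N dvd g (int k) mod int N - g (int k)"
      by (rule dvd_mod_diff)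
    have d2: "int N dvd g (int (kk k)) mod int N - g (int (kk k))"
      by (rule dvd_mod_diff)
    have d3: "int N dvd int (kk k) - (int k + \<tau>)"
      unfolding kkv by (rule dvd_mod_diff)
    have d4: "int N dvd g (int (kk k)) - g (int k + \<tau>)"
    proof -
      have "g (int (kk k)) - g (int k + \<tau>) = (int (kk k) - (int k + \<tau>)) * (a2 * (int (kk k) + (int k + \<tau>)) + a1)"
        unfolding g_def by (simp add: algebra_simps power2_eq_square)
      then show ?thesis using d3 by simp
    qed
    have "X k + (a2 * \<tau>^2 + a1 * \<tau>) + 2 * a2 * \<tau> * int k
        = (g (int k) mod int N - g (int k)) - (g (int (kk k)) mod int N - g (int (kk k))) - (g (int (kk k)) - g (int k + \<tau>))"
      unfolding X_def fval[OF k] fval[OF kkN] g_def by (simp add: algebra_simps power2_eq_square)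
    then show ?thesis using d1 d2 d4 by (metis dvd_diff)
  qed
  have XD: "int N dvd X k1 - X k2" if k1: "k1 < N" and k2: "k2 < N" and h1: "int K dvd D k1" and h2: "int K dvd D k2" for k1 k2
  proof -
    have Dk: "D k = X k + v" for k unfolding D_def X_def by simp
    have b1: "\<bar>X k1\<bar> < int N" and b2: "\<bar>X k2\<bar> < int N"
      using fb[OF k1] fb[OF kkN[of k1]] fb[OF k2] fb[OF kkN[of k2]] unfolding X_def by auto
    from V consider "K = N" | "2*N - 1 \<le> K" | "\<bar>v\<bar> \<le> int K - int N" by blast
    then show ?thesis
    proof cases
      case 1
      then have "int N dvd D k1 - D k2" using h1 h2 by simp
      then show ?thesis by (simp add: Dk)
    next
      case 2
      have "int K dvd D k1 - D k2" using h1 h2 by simp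
      then have dd: "int K dvd X k1 - X k2" by (simp add: Dk)
      have "X k1 - X k2 = 0"
      proof (rule ccontr)
        assume "X k1 - X k2 \<noteq> 0"
        from dvd_imp_le_int[OF this dd] have "int K \<le> \<bar>X k1 - X k2\<bar>" by simp
        then show False using b1 b2 2 N by linarith
      qed
      then show ?thesis by simp
    next
      case 3
      have z: "D k = 0" if "k < N" "int K dvd D k" for k
      proof (rule ccontr)
        assume "D k \<noteq> 0"
        from dvd_imp_le_int[OF this that(2)] have "int K \<le> \<bar>D k\<bar>" by simp
        moreover have "\<bar>X k\<bar> < int N"
          using fb[OF that(1)] fb[OF kkN[of k]] unfolding X_def by auto
        ultimately show False using 3 by (simp add: Dk)
      qed
      have "X k1 - X k2 = 0" using z[OF k1 h1] z[OF k2 h2] by (simp add: Dk)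
      then show ?thesis by simp
    qed
  qed
  have cop: "coprime (2 * a2 * \<tau>) (int N)"
  proof -
    have "coprime 2 (int N)" using odd by (simp add: coprime_commute[of 2] odd_iff_mod_2_eq_one)
    then show ?thesis using a2c tc by simp
  qed
  have "\<forall>x\<in>{k\<in>{..<N}. int K dvd D k}. \<forall>y\<in>{k\<in>{..<N}. int K dvd D k}. x = y"
  proof (intro ballI)
    fix k1 k2 assume A: "k1 \<in> {k\<in>{..<N}. int K dvd D k}" "k2 \<in> {k\<in>{..<N}. int K dvd D k}"
    then have k1: "k1 < N" and k2: "k2 < N" and h1: "int K dvd D k1" and h2: "int K dvd D k2" by auto
    have e: "2 * a2 * \<tau> * (int k1 - int k2) = (X k2 + (a2 * \<tau>^2 + a1 * \<tau>) + 2 * a2 * \<tau> * int k2) * (-1)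
         + (X k1 + (a2 * \<tau>^2 + a1 * \<tau>) + 2 * a2 * \<tau> * int k1) - (X k1 - X k2)"
      by (simp add: algebra_simps)
    have "int N dvd 2 * a2 * \<tau> * (int k1 - int k2)"
      unfolding e by (rule dvd_diff[OF dvd_add[OF dvd_mult2[OF Xc[OF k2]] Xc[OF k1]] XD[OF k1 k2 h1 h2]])
    then have dk: "int N dvd (int k1 - int k2)"
      using cop by (metis coprime_commute coprime_dvd_mult_right_iff)
    show "k1 = k2"
    proof (rule ccontr)
      assume "k1 \<noteq> k2"
      then have "int k1 - int k2 \<noteq> 0" by simp
      from dvd_imp_le_int[OF this dk] show False using k1 k2 by linarith
    qed
  qed
  then show ?thesis by (simp add: card_le_Suc0_iff_eq)
qed


lemma AF_le:
  fixes N K p :: nat and a2 a1 :: int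
    and f :: "nat \<Rightarrow> nat"
    and h :: "nat \<Rightarrow> nat \<Rightarrow> complex"
    and s :: "nat \<Rightarrow> nat \<Rightarrow> complex" and i j :: nat and \<tau> v :: int
  assumes N_gt: "N > 2" and N_odd: "odd N"
    and p_min: "\<forall>q. prime q \<and> q dvd N \<longrightarrow> p \<le> q"
    and K_ge: "K \<ge> N"
    and a2_coprime: "coprime a2 (int N)"
    and f_def: "\<forall>x<N. f x = nat ((a2 * int x ^ 2 + a1 * int x) mod int N) mod K"
    and h_unimod: "\<forall>i<N. \<forall>n<N. cmod (h i n) = 1"
    and h_corr: "\<forall>i<N. \<forall>j<N. i \<noteq> j \<longrightarrow>
                   cmod (\<Sum>n<N. h i n * cnj (h j n)) \<le> 1"
    and s_def: "\<forall>i<N. \<forall>t<K. \<forall>k<N. s i (t * N + k) = h i k * omega K ^ (t * f k)"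
    and i: "i < N" and j: "j < N" and tp: "- int p < \<tau>" "\<tau> < int p" and vK: "\<bar>v\<bar> < int K"
    and V: "K = N \<or> 2*N - 1 \<le> K \<or> \<bar>v\<bar> \<le> int K - int N"
    and nz: "(\<tau>, v) \<noteq> (0, 0) \<or> i \<noteq> j"
  shows "cmod (AF (N*K) (s i) (s j) \<tau> v) \<le> real K"
proof -
  have N0: "N > 0" and K0: "K > 0" using N_gt K_ge by auto
  have si: "\<forall>t<K. \<forall>k<N. s i (t*N+k) = h i k * omega K ^ (t * f k)" using s_def i by blast
  have sj: "\<forall>t<K. \<forall>k<N. s j (t*N+k) = h j k * omega K ^ (t * f k)" using s_def j by blast
  define kk where "kk = (\<lambda>k::nat. nat ((int k + \<tau>) mod int N))"
  define qq where "qq = (\<lambda>k::nat. (int k + \<tau>) div int N)"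
  define C where "C = (\<lambda>k. h i k * cnj (h j (kk k)) * cis (2*pi*real_of_int v * real k / (real N * real K)
                  - 2*pi*real_of_int (qq k) * real (f (kk k)) / real K))"
  define D where "D = (\<lambda>k. int (f k) - int (f (kk k)) + v)"
  have dec: "AF (N*K) (s i) (s j) \<tau> v = (\<Sum>k<N. C k * (\<Sum>t<K. cis (2*pi*real t*real_of_int (D k)/real K)))"
    unfolding kk_def qq_def C_def D_def by (rule AF_decomp[OF N0 K0 si sj])
  have G: "(\<Sum>t<K. cis (2*pi*real t*real_of_int (D k)/real K)) = (if int K dvd D k then of_nat K else 0)" for k
    by (rule geom_cis[OF K0])
  have kkN: "kk k < N" for k using N0 unfolding kk_def by (simp add: nat_less_iff)
  have dec2: "AF (N*K) (s i) (s j) \<tau> v = (\<Sum>k<N. C k * (if int K dvd D k then of_nat K else 0))"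
    unfolding dec G ..
  show ?thesis
  proof (cases "\<tau> = 0")
    case False
    have tc: "coprime \<tau> (int N)" using coprime_small[OF N0 p_min False] tp by simp
    have card: "card {k\<in>{..<N}. int K dvd D k} \<le> 1"
      unfolding D_def kk_def by (rule uniq[OF N0 N_odd a2_coprime tc K_ge f_def V])
    have C1: "\<forall>k<N. cmod (C k) \<le> 1"
      using h_unimod i j kkN unfolding C_def by (simp add: norm_mult)
    show ?thesis unfolding dec2 by (rule sum_bound[OF C1 card])
  next
    case True
    have kk0: "kk k = k" if "k < N" for k using that unfolding kk_def True by simp
    have D0: "D k = v" if "k < N" for k unfolding D_def using kk0[OF that] by simp
    show ?thesis
    proof (cases "v = 0")
      case False
      have nd: "\<not> int K dvd v"
      proof
        assume "int K dvd v"
        from dvd_imp_le_int[OF False this] vK show False by simp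
      qed
      have "AF (N*K) (s i) (s j) \<tau> v = 0" unfolding dec2 using nd D0 by simp
      then show ?thesis by simp
    next
      case v0: True
      then have ij: "i \<noteq> j" using nz True by simp
      have qq0: "qq k = 0" if "k < N" for k using that unfolding qq_def True by simp
      have "AF (N*K) (s i) (s j) \<tau> v = (\<Sum>k<N. h i k * cnj (h j k) * of_nat K)"
        unfolding dec2 by (rule sum.cong) (simp_all add: D0 kk0 qq0 C_def v0)
      also have "\<dots> = (\<Sum>k<N. h i k * cnj (h j k)) * of_nat K" by (simp add: sum_distrib_right)
      finally have "cmod (AF (N*K) (s i) (s j) \<tau> v) = cmod (\<Sum>k<N. h i k * cnj (h j k)) * real K"
        by (simp add: norm_mult)
      also have "\<dots> \<le> 1 * real K" using h_corr i j ij by (intro mult_right_mono) auto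
      finally show ?thesis by simp
    qed
  qed
qed


lemma LAZ_from:
  assumes "\<And>i j \<tau> v. i<N \<Longrightarrow> j<N \<Longrightarrow> - int p < \<tau> \<Longrightarrow> \<tau> < int p \<Longrightarrow> - B < v \<Longrightarrow> v < B
     \<Longrightarrow> (\<tau>, v) \<noteq> (0, 0) \<or> i \<noteq> j \<Longrightarrow> cmod (AF (N*K) (s i) (s j) \<tau> v) \<le> real K"
  shows "LAZ_set N (N*K) (box_region (int p) B) (real K) s"
  unfolding LAZ_set_def box_region_def using assms by auto

theorem corollary1:
  fixes N K p :: nat and a2 a1 :: int
    and f :: "nat \<Rightarrow> nat"
    and h :: "nat \<Rightarrow> nat \<Rightarrow> complex"
    and s :: "nat \<Rightarrow> nat \<Rightarrow> complex"
  assumes N_gt: "N > 2" and N_odd: "odd N"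
    and p_prime: "prime p" and p_dvd: "p dvd N"
    and p_min: "\<forall>q. prime q \<and> q dvd N \<longrightarrow> p \<le> q"
    and K_ge: "K \<ge> N"
    and a2_range: "0 \<le> a2 \<and> a2 < int N" and a1_range: "0 \<le> a1 \<and> a1 < int N"
    and a2_coprime: "coprime a2 (int N)"
    and f_def: "\<forall>x<N. f x = nat ((a2 * int x ^ 2 + a1 * int x) mod int N) mod K"
    and h_unimod: "\<forall>i<N. \<forall>n<N. cmod (h i n) = 1"
    and h_corr: "\<forall>i<N. \<forall>j<N. i \<noteq> j \<longrightarrow>
                   cmod (\<Sum>n<N. h i n * cnj (h j n)) \<le> 1"
    and h_dopp: "\<forall>i<N. \<forall>j<N. i \<noteq> j \<longrightarrow> (\<forall>v<N.
                   cmod (\<Sum>n<N. h i n * cnj (h j n) * omega N ^ (n * v)) < real N)"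
    and s_def: "\<forall>i<N. \<forall>t<K. \<forall>k<N. s i (t * N + k) = h i k * omega K ^ (t * f k)"
  shows "(K = N \<longrightarrow> LAZ_set N (N * K) (box_region (int p) (int N)) (real K) s)
       \<and> (N < K \<and> K < 2 * N - 1 \<longrightarrow>
            LAZ_set N (N * K) (box_region (int p) (int K - int N + 1)) (real K) s)
       \<and> (K \<ge> 2 * N - 1 \<longrightarrow> LAZ_set N (N * K) (box_region (int p) (int K)) (real K) s)"
proof (intro conjI impI)
  note base = AF_le[OF N_gt N_odd p_min K_ge a2_coprime f_def h_unimod h_corr s_def]
  show "LAZ_set N (N * K) (box_region (int p) (int N)) (real K) s" if "K = N"
    by (rule LAZ_from) (rule base, insert that, auto)
  show "LAZ_set N (N * K) (box_region (int p) (int K - int N + 1)) (real K) s" if "N < K \<and> K < 2 * N - 1"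
    by (rule LAZ_from) (rule base, insert that, auto)
  show "LAZ_set N (N * K) (box_region (int p) (int K)) (real K) s" if "K \<ge> 2 * N - 1"
    by (rule LAZ_from) (rule base, insert that, auto)
qed

end
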